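(* Let $k\in\mathbb{N}$. The only isometric multiplication operators on $\mathcal{L}^{(k)}$, and the only isometric multiplication operators on $\mathcal{L}^{(k)}_0$, are those $M_\psi$ whose symbol $\psi$ is a constant function of modulus one.
   Context: $T$ is a tree (locally finite, connected, simply connected graph, identified with its vertex set) without terminal vertices, rooted at $o$. $|v|$ is the distance from $o$ to $v$; for $v\ne o$, $v^-$ is the parent of $v$. $T^*=T\setminus\{o\}$, $Df(v)=|f(v)-f(v^-)|$. For $x\ge1$: $\ell_0(x)=1$, $\ell_1(x)=1+\ln x$, $\ell_j(x)=1+\ln\ell_{j-1}(x)$ for $j\ge2$. $\mathcal{L}^{(k)}$ is the space of $f:T\to\mathbb{C}$ with $\sup_{v\in T^*}|v|\prod_{j=0}^{k-1}\ell_j(|v|)Df(v)<\infty$, normed by $\|f\|_k=|f(o)|+\sup_{v\in T^*}|v|\prod_{j=0}^{k-1}\ell_j(|v|)Df(v)$; $\mathcal{L}^{(k)}_0$ is its subspace of $f$ with $|v|\prod_{j=0}^{k-1}\ell_j(|v|)Df(v)\to0$ as $|v|\to\infty$. $M_\psi f=\psi f$; an isometric multiplication operator on $X$ is one with $M_\psi(X)\subseteq X$ and $\|\psi f\|_k=\|f\|_k$ for all $f\in X$. *)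

theory Defs
  imports Complex_Main
begin

text \<open>A rooted tree is encoded by its vertex type 'v (the vertex set T is UNIV),
  a root r and a parent map par (par v = v^- for v \<noteq> r; convention par r = r).
  Every vertex reaches the root by iterating par; hence the graph with edges
  {v, par v} (v \<noteq> r) is connected and simply connected.\<close>

definition is_rooted_tree :: "('v \<Rightarrow> 'v) \<Rightarrow> 'v \<Rightarrow> bool" where
  "is_rooted_tree par r \<longleftrightarrow> par r = r \<and> (\<forall>v. \<exists>n. (par ^^ n) v = r)"

definition children :: "('v \<Rightarrow> 'v) \<Rightarrow> 'v \<Rightarrow> 'v \<Rightarrow> 'v set" where
  "children par r v = {w. w \<noteq> r \<and> par w = v}"

definition degree :: "('v \<Rightarrow> 'v) \<Rightarrow> 'v \<Rightarrow> 'v \<Rightarrow> nat" where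
  "degree par r v = card (children par r v) + (if v = r then 0 else 1)"

definition good_tree :: "('v \<Rightarrow> 'v) \<Rightarrow> 'v \<Rightarrow> bool" where
  "good_tree par r \<longleftrightarrow> is_rooted_tree par r
     \<and> (\<forall>v. finite (children par r v))
     \<and> (\<forall>v. degree par r v \<noteq> 1)"

definition vlen :: "('v \<Rightarrow> 'v) \<Rightarrow> 'v \<Rightarrow> 'v \<Rightarrow> nat" where
  "vlen par r v = (LEAST n. (par ^^ n) v = r)"

fun ell :: "nat \<Rightarrow> real \<Rightarrow> real" where
  "ell 0 x = 1"
| "ell (Suc 0) x = 1 + ln x"
| "ell (Suc (Suc j)) x = 1 + ln (ell (Suc j) x)"

definition weight :: "nat \<Rightarrow> nat \<Rightarrow> real" where
  "weight k n = real n * (\<Prod>j<k. ell j (real n))"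

definition Df :: "('v \<Rightarrow> 'v) \<Rightarrow> ('v \<Rightarrow> complex) \<Rightarrow> 'v \<Rightarrow> real" where
  "Df par f v = cmod (f v - f (par v))"

definition wquot :: "('v \<Rightarrow> 'v) \<Rightarrow> 'v \<Rightarrow> nat \<Rightarrow> ('v \<Rightarrow> complex) \<Rightarrow> 'v \<Rightarrow> real" where
  "wquot par r k f v = weight k (vlen par r v) * Df par f v"

definition Lk :: "('v \<Rightarrow> 'v) \<Rightarrow> 'v \<Rightarrow> nat \<Rightarrow> ('v \<Rightarrow> complex) set" where
  "Lk par r k = {f. bdd_above (wquot par r k f ` {v. v \<noteq> r})}"

definition Lk0 :: "('v \<Rightarrow> 'v) \<Rightarrow> 'v \<Rightarrow> nat \<Rightarrow> ('v \<Rightarrow> complex) set" where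
  "Lk0 par r k = {f. f \<in> Lk par r k \<and>
      (\<forall>e>0. \<exists>N. \<forall>v. v \<noteq> r \<and> vlen par r v \<ge> N \<longrightarrow> wquot par r k f v < e)}"

text \<open>The norm; the supremum over T* is taken with 0 inserted (all terms are \<ge> 0),
  so that it is 0 when T* is empty.\<close>
definition normk :: "('v \<Rightarrow> 'v) \<Rightarrow> 'v \<Rightarrow> nat \<Rightarrow> ('v \<Rightarrow> complex) \<Rightarrow> real" where
  "normk par r k f = cmod (f r) + Sup (insert 0 (wquot par r k f ` {v. v \<noteq> r}))"

definition isometric_mult :: "('v \<Rightarrow> 'v) \<Rightarrow> 'v \<Rightarrow> nat \<Rightarrow> ('v \<Rightarrow> complex) set
    \<Rightarrow> ('v \<Rightarrow> complex) \<Rightarrow> bool" where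
  "isometric_mult par r k X psi \<longleftrightarrow>
     (\<forall>f\<in>X. (\<lambda>v. psi v * f v) \<in> X) \<and>
     (\<forall>f\<in>X. normk par r k (\<lambda>v. psi v * f v) = normk par r k f)"

end

theory Submission
  imports Defs
begin

lemma ell_ge1: "x \<ge> 1 \<Longrightarrow> ell j x \<ge> 1"
  by (induction j x rule: ell.induct) auto

lemma weight_pos: "n \<ge> 1 \<Longrightarrow> weight k n > 0"
  unfolding weight_def
  by (intro mult_pos_pos prod_pos) (auto intro: less_le_trans[OF _ ell_ge1])

lemma sup_scale:
  fixes g :: "'a \<Rightarrow> real"
  assumes c: "c \<ge> 0" and b: "bdd_above (g ` A)"
  shows "Sup (insert 0 ((\<lambda>x. c * g x) ` A)) = c * Sup (insert 0 (g ` A))"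
proof -
  have b0: "bdd_above (insert 0 (g ` A))" using b by simp
  have b1: "bdd_above (insert 0 ((\<lambda>x. c * g x) ` A))"
  proof -
    obtain M where "\<forall>y\<in>g ` A. y \<le> M" using b by (auto simp: bdd_above_def)
    then have "\<forall>y\<in>insert 0 ((\<lambda>x. c * g x) ` A). y \<le> c * max M 0"
      using c by (auto intro!: mult_left_mono)
    then show ?thesis by (auto simp: bdd_above_def)
  qed
  have S0: "Sup (insert 0 (g ` A)) \<ge> 0" by (rule cSup_upper[OF _ b0]) auto
  have T0: "Sup (insert 0 ((\<lambda>x. c * g x) ` A)) \<ge> 0" by (rule cSup_upper[OF _ b1]) auto
  have le1: "Sup (insert 0 ((\<lambda>x. c * g x) ` A)) \<le> c * Sup (insert 0 (g ` A))"
  proof (rule cSup_least)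
    fix y assume "y \<in> insert 0 ((\<lambda>x. c * g x) ` A)"
    then show "y \<le> c * Sup (insert 0 (g ` A))"
    proof
      assume "y = 0" then show ?thesis using c S0 by simp
    next
      assume "y \<in> (\<lambda>x. c * g x) ` A"
      then obtain x where x: "x \<in> A" "y = c * g x" by auto
      have "g x \<le> Sup (insert 0 (g ` A))" by (rule cSup_upper[OF _ b0]) (use x in auto)
      then show ?thesis using x c by (simp add: mult_left_mono)
    qed
  qed simp
  show ?thesis
  proof (cases "c = 0")
    case True
    then show ?thesis using le1 T0 by simp
  next
    case False
    then have cp: "c > 0" using c by simp
    have "Sup (insert 0 (g ` A)) \<le> Sup (insert 0 ((\<lambda>x. c * g x) ` A)) / c"
    proof (rule cSup_least)
      fix y assume "y \<in> insert 0 (g ` A)"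
      then show "y \<le> Sup (insert 0 ((\<lambda>x. c * g x) ` A)) / c"
      proof
        assume "y = 0" then show ?thesis using cp T0 by simp
      next
        assume "y \<in> g ` A"
        then obtain x where x: "x \<in> A" "y = g x" by auto
        have "c * g x \<le> Sup (insert 0 ((\<lambda>x. c * g x) ` A))"
          by (rule cSup_upper[OF _ b1]) (use x in auto)
        then show ?thesis using x cp by (simp add: field_simps)
      qed
    qed simp
    then have "c * Sup (insert 0 (g ` A)) \<le> Sup (insert 0 ((\<lambda>x. c * g x) ` A))"
      using cp by (simp add: field_simps)
    then show ?thesis using le1 by simp
  qed
qed

lemma wquot_scale: "wquot par r k (\<lambda>w. a * f w) v = cmod a * wquot par r k f v"
  unfolding wquot_def Df_def
  by (simp add: right_diff_distrib[symmetric] norm_mult)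

lemma normk_scale:
  assumes "f \<in> Lk par r k"
  shows "normk par r k (\<lambda>w. a * f w) = cmod a * normk par r k f"
proof -
  have "Sup (insert 0 (wquot par r k (\<lambda>w. a * f w) ` {v. v \<noteq> r}))
       = cmod a * Sup (insert 0 (wquot par r k f ` {v. v \<noteq> r}))"
    unfolding wquot_scale
    by (rule sup_scale) (use assms in \<open>auto simp: Lk_def\<close>)
  then show ?thesis unfolding normk_def by (simp add: norm_mult distrib_left)
qed

lemma vlen_pos:
  assumes "is_rooted_tree par r" "v \<noteq> r"
  shows "vlen par r v \<ge> 1"
proof -
  have ex: "\<exists>n. (par ^^ n) v = r" using assms(1) by (auto simp: is_rooted_tree_def)
  have "(par ^^ vlen par r v) v = r" unfolding vlen_def by (rule LeastI_ex[OF ex])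
  then show ?thesis using assms(2) by (cases "vlen par r v") auto
qed

lemma par_neq:
  assumes "is_rooted_tree par r" "v \<noteq> r"
  shows "par v \<noteq> v"
proof
  assume h: "par v = v"
  have "(par ^^ n) v = v" for n by (induction n) (use h in auto)
  then show False using assms unfolding is_rooted_tree_def by metis
qed

lemma const_in:
  "(\<lambda>_. c) \<in> Lk0 par r k" "(\<lambda>_. c) \<in> Lk par r k"
  "wquot par r k (\<lambda>_. c) = (\<lambda>_. 0)"
  by (auto simp: Lk0_def Lk_def wquot_def Df_def)

lemma normk_one: "normk par r k (\<lambda>_. 1) = 1"
  by (simp add: normk_def const_in(3) image_constant_conv)


definition delta :: "'v \<Rightarrow> 'v \<Rightarrow> complex" where
  "delta v = (\<lambda>w. if w = v then 1 else 0)"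

lemma delta_wquot0:
  assumes "w \<notin> insert v (children par r v)" "w \<noteq> r"
  shows "wquot par r k (delta v) w = 0"
  using assms by (auto simp: wquot_def Df_def delta_def children_def)

lemma delta_in:
  assumes g: "good_tree par r"
  shows "delta v \<in> Lk0 par r k" "delta v \<in> Lk par r k"
proof -
  define F where "F = insert v (children par r v)"
  have fin: "finite F" using g by (auto simp: F_def good_tree_def)
  have sub: "wquot par r k (delta v) ` {w. w \<noteq> r} \<subseteq> insert 0 (wquot par r k (delta v) ` F)"
  proof (rule subsetI)
    fix y assume "y \<in> wquot par r k (delta v) ` {w. w \<noteq> r}"
    then obtain w where w: "w \<noteq> r" "y = wquot par r k (delta v) w" by auto
    show "y \<in> insert 0 (wquot par r k (delta v) ` F)"
    proof (cases "w \<in> F")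
      case True then show ?thesis using w by auto
    next
      case False then show ?thesis using w delta_wquot0[of w v par r k] by (simp add: F_def)
    qed
  qed
  have bd: "bdd_above (wquot par r k (delta v) ` {w. w \<noteq> r})"
    by (rule bdd_above_mono[OF _ sub]) (use fin in simp)
  then show L: "delta v \<in> Lk par r k" by (simp add: Lk_def)
  have "\<exists>N. \<forall>w. w \<noteq> r \<and> vlen par r w \<ge> N \<longrightarrow> wquot par r k (delta v) w < e" if "e > 0" for e
  proof (intro exI allI impI)
    fix w assume w: "w \<noteq> r \<and> Suc (Max (vlen par r ` F)) \<le> vlen par r w"
    have "w \<notin> F"
    proof
      assume "w \<in> F"
      then have "vlen par r w \<le> Max (vlen par r ` F)" using fin by simp
      then show False using w by simp
    qed
    then show "wquot par r k (delta v) w < e" using delta_wquot0[of w v par r k] w that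
      by (simp add: F_def)
  qed
  then show "delta v \<in> Lk0 par r k" using L by (simp add: Lk0_def)
qed

lemma delta_norm_pos:
  assumes g: "good_tree par r"
  shows "normk par r k (delta v) > 0"
proof -
  have bd: "bdd_above (insert 0 (wquot par r k (delta v) ` {w. w \<noteq> r}))"
    using delta_in(2)[OF g, of v k] by (simp add: Lk_def)
  have S0: "Sup (insert 0 (wquot par r k (delta v) ` {w. w \<noteq> r})) \<ge> 0"
    by (rule cSup_upper[OF _ bd]) auto
  show ?thesis
  proof (cases "v = r")
    case True
    then show ?thesis using S0 by (simp add: normk_def delta_def)
  next
    case False
    have rt: "is_rooted_tree par r" using g by (simp add: good_tree_def)
    have "wquot par r k (delta v) v = weight k (vlen par r v)"
      using par_neq[OF rt False] by (simp add: wquot_def Df_def delta_def)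
    also have "\<dots> > 0" by (rule weight_pos[OF vlen_pos[OF rt False]])
    finally have p: "wquot par r k (delta v) v > 0" .
    have "wquot par r k (delta v) v \<le> Sup (insert 0 (wquot par r k (delta v) ` {w. w \<noteq> r}))"
      by (rule cSup_upper[OF _ bd]) (use False in auto)
    then show ?thesis using p False by (simp add: normk_def delta_def)
  qed
qed

lemma main_dir:
  assumes g: "good_tree par r" and X: "X \<subseteq> Lk par r k"
    and dX: "\<And>v. delta v \<in> X" and oX: "(\<lambda>_. 1) \<in> X"
    and iso: "isometric_mult par r k X psi"
  shows "\<exists>c. cmod c = 1 \<and> psi = (\<lambda>_. c)"
proof -
  have rt: "is_rooted_tree par r" using g by (simp add: good_tree_def)
  have mod1: "cmod (psi v) = 1" for v
  proof -
    have e: "(\<lambda>w. psi w * delta v w) = (\<lambda>w. psi v * delta v w)"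
      by (auto simp: delta_def)
    have "normk par r k (\<lambda>w. psi w * delta v w) = normk par r k (delta v)"
      using iso dX by (simp add: isometric_mult_def)
    then have "cmod (psi v) * normk par r k (delta v) = normk par r k (delta v)"
      unfolding e using normk_scale[of "delta v" par r k "psi v"] dX X by auto
    then show ?thesis using delta_norm_pos[OF g, of k v] by simp
  qed
  have h: "\<forall>f\<in>X. (\<lambda>v. psi v * f v) \<in> X" using iso by (simp add: isometric_mult_def)
  from bspec[OF h oX] have pX: "psi \<in> X" by simp
  have "normk par r k psi = 1"
  proof -
    have h2: "\<forall>f\<in>X. normk par r k (\<lambda>v. psi v * f v) = normk par r k f"
      using iso by (simp add: isometric_mult_def)
    from bspec[OF h2 oX] show ?thesis using normk_one[of par r k] by simp
  qed
  then have S: "Sup (insert 0 (wquot par r k psi ` {w. w \<noteq> r})) = 0"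
    using mod1[of r] by (simp add: normk_def)
  have bd: "bdd_above (insert 0 (wquot par r k psi ` {w. w \<noteq> r}))"
    using pX X by (auto simp: Lk_def)
  have step: "psi (par w) = psi w" for w
  proof (cases "w = r")
    case True then show ?thesis using rt by (simp add: is_rooted_tree_def)
  next
    case False
    have "wquot par r k psi w \<le> 0"
      using cSup_upper[OF _ bd, of "wquot par r k psi w"] False S by auto
    moreover have "weight k (vlen par r w) > 0" by (rule weight_pos[OF vlen_pos[OF rt False]])
    ultimately have "Df par psi w \<le> 0" by (simp add: wquot_def mult_le_0_iff)
    then show ?thesis by (simp add: Df_def)
  qed
  have it: "psi ((par ^^ n) w) = psi w" for n w
    by (induction n) (auto simp: step)
  have "psi w = psi r" for w
  proof -
    obtain n where "(par ^^ n) w = r" using rt by (auto simp: is_rooted_tree_def)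
    then show ?thesis using it[of n w] by simp
  qed
  then show ?thesis using mod1[of r] by (intro exI[of _ "psi r"]) auto
qed

lemma const_wquot: "cmod c = 1 \<Longrightarrow> wquot par r k (\<lambda>w. c * f w) = wquot par r k f"
  by (rule ext) (simp add: wquot_scale)

lemma const_iso:
  assumes "cmod c = 1"
  shows "isometric_mult par r k (Lk par r k) (\<lambda>_. c)"
        "isometric_mult par r k (Lk0 par r k) (\<lambda>_. c)"
  using const_wquot[OF assms, of par r k]
  by (auto simp: isometric_mult_def Lk_def Lk0_def normk_def norm_mult assms)

theorem theorem5p1:
  fixes par :: "'v \<Rightarrow> 'v" and r :: 'v and k :: nat and psi :: "'v \<Rightarrow> complex"
  assumes "good_tree par r"
  shows "(isometric_mult par r k (Lk par r k) psi \<longleftrightarrow> (\<exists>c. cmod c = 1 \<and> psi = (\<lambda>_. c)))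
       \<and> (isometric_mult par r k (Lk0 par r k) psi \<longleftrightarrow> (\<exists>c. cmod c = 1 \<and> psi = (\<lambda>_. c)))"
proof (intro conjI iffI)
  assume "isometric_mult par r k (Lk par r k) psi"
  then show "\<exists>c. cmod c = 1 \<and> psi = (\<lambda>_. c)"
    by (rule main_dir[OF assms order_refl delta_in(2)[OF assms] const_in(2)])
next
  assume "isometric_mult par r k (Lk0 par r k) psi"
  then show "\<exists>c. cmod c = 1 \<and> psi = (\<lambda>_. c)"
  proof -
    have sub: "Lk0 par r k \<subseteq> Lk par r k" by (auto simp: Lk0_def)
    show ?thesis using main_dir[OF assms sub delta_in(1)[OF assms] const_in(1)] \<open>isometric_mult par r k (Lk0 par r k) psi\<close> by blast
  qed
next
  assume "\<exists>c. cmod c = 1 \<and> psi = (\<lambda>_. c)"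
  then obtain c where c: "cmod c = 1" "psi = (\<lambda>_. c)" by blast
  then show "isometric_mult par r k (Lk par r k) psi" using const_iso(1)[of c] by simp
next
  assume "\<exists>c. cmod c = 1 \<and> psi = (\<lambda>_. c)"
  then obtain c where c: "cmod c = 1" "psi = (\<lambda>_. c)" by blast
  then show "isometric_mult par r k (Lk0 par r k) psi" using const_iso(2)[of c] by simp
qed

end
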